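(* Consider a sequence of total systems indexed by the size $N$ (the system S is fixed and the bath grows). For each $N$, the total Hamiltonian $H=H^{(N)}$ on the finite-dimensional space $\mathcal{H}_{\mathrm{S}}\otimes\mathcal{H}_{\mathrm{B}}^{(N)}$ has non-degenerate spectrum with eigenpairs $(E_j,|E_j\rangle)$, and the initial state is a product $\rho(0)=\rho_{\mathrm{S}}(0)\otimes\rho_{\mathrm{B}}(0)$ (depending on $N$). Fix an energy density $u$ and widths $\Delta=\Delta_N>0$ with $\Delta_N=\mathcal{O}(N^\alpha)$, $0\le\alpha<1$; let $M_{uN,\Delta}:=\{j:|E_j-uN|\le\Delta\}$ (assumed nonempty), $D^{\mathrm{mc}}:=|M_{uN,\Delta}|$, and $\rho^{\mathrm{mc}}:=\frac{1}{D^{\mathrm{mc}}}\sum_{j\in M_{uN,\Delta}}|E_j\rangle\langle E_j|$. Assume: (i) with $P_{\mathrm{out}}:=\sum_{j\notin M_{uN,\Delta}}|E_j\rangle\langle E_j|$, for every $\epsilon>0$, $\mathrm{Tr}[P_{\mathrm{out}}\rho(0)]<\epsilon$ for all sufficiently large $N$; (ii) (weak ETH) for every $\epsilon>0$ there is a constant $\gamma_\epsilon>0$ such that for every $N$, $\frac{1}{D^{\mathrm{mc}}}\bigl|\{j\in M_{uN,\Delta}:\mathcal{D}_{\mathrm{S}}(|E_j\rangle\langle E_j|,\rho^{\mathrm{mc}})>\epsilon\}\bigr|<e^{-\gamma_\epsilon N}$; (iii) (large effective dimension) for every $\epsilon,\tilde\epsilon>0$, $D_{\mathrm{eff}}>D^{\mathrm{mc}}e^{-\gamma_\epsilon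 N}/\tilde\epsilon$ for all sufficiently large $N$, with $\gamma_\epsilon$ as in (ii). Then for every $\epsilon>0$, $\mathcal{D}_{\mathrm{S}}(\omega,\rho^{\mathrm{mc}})<\epsilon$ for all sufficiently large $N$, where $\omega$ is the diagonal ensemble of $\rho(0)$.
   Context: The diagonal ensemble of $\rho(0)$ is $\omega:=\lim_{\tau\to\infty}\frac1\tau\int_0^\tau e^{-iHt}\rho(0)e^{iHt}\,dt=\sum_j|E_j\rangle\langle E_j|\rho(0)|E_j\rangle\langle E_j|$ (non-degenerate $H$). The effective dimension is $D_{\mathrm{eff}}:=1/\sum_j\langle E_j|\rho(0)|E_j\rangle^2$. For density operators $\rho,\tau$ on $\mathcal{H}_{\mathrm{S}}\otimes\mathcal{H}_{\mathrm{B}}$, the local trace distance is $\mathcal{D}_{\mathrm{S}}(\rho,\tau):=\frac12\mathrm{Tr}\bigl|\mathrm{Tr}_{\mathrm{B}}\rho-\mathrm{Tr}_{\mathrm{B}}\tau\bigr|$. *)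

theory Defs
  imports "Jordan_Normal_Form.Matrix" "Jordan_Normal_Form.Char_Poly"
    "HOL-Computational_Algebra.Polynomial" "HOL-Library.Landau_Symbols"
begin

definition cadj :: "complex mat \<Rightarrow> complex mat" where
  "cadj A = mat (dim_col A) (dim_row A) (\<lambda>(i,j). cnj (A $$ (j,i)))"

text \<open>Trace norm Tr|A| = sum of the singular values of A, i.e. of the square roots
  of the eigenvalues (with multiplicity) of A^* A.\<close>
definition trace_norm :: "complex mat \<Rightarrow> real" where
  "trace_norm A = sum_mset (image_mset (\<lambda>z. sqrt (cmod z)) (proots (char_poly (cadj A * A))))"

definition braket :: "complex vec \<Rightarrow> complex vec \<Rightarrow> complex" where
  "braket v w = (\<Sum>i<dim_vec v. cnj (v $ i) * w $ i)"

definition ketbra :: "complex vec \<Rightarrow> complex mat" where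
  "ketbra v = mat (dim_vec v) (dim_vec v) (\<lambda>(i,j). v $ i * cnj (v $ j))"

definition sum_mats :: "nat \<Rightarrow> ('i \<Rightarrow> complex mat) \<Rightarrow> 'i set \<Rightarrow> complex mat" where
  "sum_mats n f S = mat n n (\<lambda>(i,k). \<Sum>j\<in>S. f j $$ (i,k))"

definition mtrace :: "complex mat \<Rightarrow> complex" where
  "mtrace A = (\<Sum>i<dim_row A. A $$ (i,i))"

definition density :: "nat \<Rightarrow> complex mat \<Rightarrow> bool" where
  "density n A \<longleftrightarrow> A \<in> carrier_mat n n \<and> cadj A = A \<and>
     (\<forall>v \<in> carrier_vec n. 0 \<le> Re (braket v (A *\<^sub>v v))) \<and> mtrace A = 1"

text \<open>Tensor (Kronecker) product for H_S (dim dS) tensor H_B (dim dB);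
  basis index (a,b) corresponds to a * dB + b.\<close>
definition tensor :: "nat \<Rightarrow> nat \<Rightarrow> complex mat \<Rightarrow> complex mat \<Rightarrow> complex mat" where
  "tensor dS dB A B = mat (dS * dB) (dS * dB)
     (\<lambda>(i,j). A $$ (i div dB, j div dB) * B $$ (i mod dB, j mod dB))"

definition ptrace_B :: "nat \<Rightarrow> nat \<Rightarrow> complex mat \<Rightarrow> complex mat" where
  "ptrace_B dS dB R = mat dS dS (\<lambda>(a,a'). \<Sum>b<dB. R $$ (a * dB + b, a' * dB + b))"

definition local_dist :: "nat \<Rightarrow> nat \<Rightarrow> complex mat \<Rightarrow> complex mat \<Rightarrow> real" where
  "local_dist dS dB \<rho> \<tau> = trace_norm (ptrace_B dS dB \<rho> - ptrace_B dS dB \<tau>) / 2"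

end

theory Submission
  imports Defs "Jordan_Normal_Form.Schur_Decomposition" "HOL-Analysis.L2_Norm"
begin

lemma mtrace_comm:
  assumes "A \<in> carrier_mat n m" "B \<in> carrier_mat m n"
  shows "mtrace (A * B) = mtrace (B * A)"
proof -
  have "mtrace (A * B) = (\<Sum>i<n. \<Sum>k<m. A $$ (i,k) * B $$ (k,i))"
    using assms unfolding mtrace_def by (auto simp: scalar_prod_def atLeast0LessThan intro!: sum.cong)
  also have "\<dots> = (\<Sum>k<m. \<Sum>i<n. B $$ (k,i) * A $$ (i,k))"
    by (subst sum.swap) (simp add: mult.commute)
  also have "\<dots> = mtrace (B * A)"
    using assms unfolding mtrace_def by (auto simp: scalar_prod_def atLeast0LessThan intro!: sum.cong)
  finally show ?thesis .
qed

lemma proots_lin_prod: "proots (\<Prod>a\<leftarrow>as. [:- a, 1:]) = mset (as :: complex list)"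
proof (induction as)
  case Nil then show ?case by simp
next
  case (Cons a as)
  have nz: "(\<Prod>a\<leftarrow>as. [:- a, 1:]) \<noteq> (0::complex poly)"
    by (auto simp: prod_list_zero_iff)
  have "proots ([:- a, 1:] * (\<Prod>a\<leftarrow>as. [:- a, 1:])) = proots [:- a, 1:] + proots (\<Prod>a\<leftarrow>as. [:- a, 1:])"
    by (rule proots_mult) (use nz in auto)
  moreover have "proots [:- a, 1:] = {#a#}" using proots_linear_factor[of "-a"] by simp
  ultimately show ?case using Cons by simp
qed

lemma mv_index:
  assumes "B \<in> carrier_mat n m" "w \<in> carrier_vec m" "i < n"
  shows "(B *\<^sub>v w) $ i = (\<Sum>j<m. B $$ (i,j) * w $ j)"
  using assms by (auto simp: mult_mat_vec_def scalar_prod_def atLeast0LessThan intro!: sum.cong)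

lemma cadj_carrier: "X \<in> carrier_mat n m \<Longrightarrow> cadj X \<in> carrier_mat m n"
  unfolding cadj_def by auto

lemma cadj_mult_index:
  assumes X: "X \<in> carrier_mat d e" and i: "i < e" and j: "j < e"
  shows "(cadj X * X) $$ (i,j) = (\<Sum>k<d. cnj (X $$ (k,i)) * X $$ (k,j))"
  using assms unfolding cadj_def by (auto simp: scalar_prod_def atLeast0LessThan intro!: sum.cong)

lemma eig_nonneg:
  assumes X: "X \<in> carrier_mat d d" and ev: "eigenvector (cadj X * X) w a"
  shows "a = complex_of_real (Re a) \<and> Re a \<ge> 0"
proof -
  let ?B = "cadj X * X"
  have Bc: "?B \<in> carrier_mat d d" by (metis mult_carrier_mat cadj_carrier X)
  from ev Bc have w: "w \<in> carrier_vec d" and wnz: "w \<noteq> 0\<^sub>v d" and ew: "?B *\<^sub>v w = a \<cdot>\<^sub>v w"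
    unfolding eigenvector_def by auto
  define y where "y k = (\<Sum>j<d. X $$ (k,j) * w $ j)" for k
  have "(\<Sum>i<d. cnj (w $ i) * (?B *\<^sub>v w) $ i) = (\<Sum>i<d. cnj (w $ i) * (\<Sum>j<d. (\<Sum>k<d. cnj (X $$ (k,i)) * X $$ (k,j)) * w $ j))"
  proof (rule sum.cong[OF refl])
    fix i assume i: "i \<in> {..<d}"
    have "(?B *\<^sub>v w) $ i = (\<Sum>j<d. ?B $$ (i,j) * w $ j)"
      using Bc w i by (simp add: mv_index)
    also have "\<dots> = (\<Sum>j<d. (\<Sum>k<d. cnj (X $$ (k,i)) * X $$ (k,j)) * w $ j)"
      using i by (auto simp: cadj_mult_index[OF X] intro!: sum.cong)
    finally show "cnj (w $ i) * (?B *\<^sub>v w) $ i = cnj (w $ i) * (\<Sum>j<d. (\<Sum>k<d. cnj (X $$ (k,i)) * X $$ (k,j)) * w $ j)" by simp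
  qed
  also have "\<dots> = (\<Sum>i<d. \<Sum>j<d. \<Sum>k<d. cnj (w $ i) * cnj (X $$ (k,i)) * X $$ (k,j) * w $ j)"
    by (simp add: sum_distrib_left sum_distrib_right mult_ac)
  also have "\<dots> = (\<Sum>i<d. \<Sum>k<d. \<Sum>j<d. cnj (w $ i) * cnj (X $$ (k,i)) * X $$ (k,j) * w $ j)"
    by (rule sum.cong[OF refl], rule sum.swap)
  also have "\<dots> = (\<Sum>k<d. \<Sum>i<d. \<Sum>j<d. cnj (w $ i) * cnj (X $$ (k,i)) * X $$ (k,j) * w $ j)"
    by (rule sum.swap)
  also have "\<dots> = (\<Sum>k<d. cnj (y k) * y k)"
    unfolding y_def by (simp add: sum_distrib_left sum_distrib_right cnj_sum mult_ac)
  finally have e1: "(\<Sum>i<d. cnj (w $ i) * (?B *\<^sub>v w) $ i) = (\<Sum>k<d. cnj (y k) * y k)" .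
  have e2: "(\<Sum>i<d. cnj (w $ i) * (?B *\<^sub>v w) $ i) = a * (\<Sum>i<d. cnj (w $ i) * w $ i)"
    using w by (simp add: ew sum_distrib_left mult_ac)
  have sq: "cnj z * z = complex_of_real ((cmod z)\<^sup>2)" for z :: complex
    by (metis complex_norm_square mult.commute of_real_power)
  define W where "W = (\<Sum>i<d. (cmod (w $ i))\<^sup>2)"
  define Y where "Y = (\<Sum>k<d. (cmod (y k))\<^sup>2)"
  have "\<exists>i<d. w $ i \<noteq> 0" using w wnz by (metis carrier_vecD eq_vecI index_zero_vec(1) index_zero_vec(2))
  then obtain i0 where i0: "i0 < d" "w $ i0 \<noteq> 0" by auto
  have Wpos: "W > 0" unfolding W_def
    by (rule sum_pos2[of _ i0]) (use i0 in auto)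
  have "a * complex_of_real W = complex_of_real Y"
    using e1 e2 unfolding W_def Y_def by (simp add: sq)
  then have "a = complex_of_real (Y / W)" using Wpos
    by (simp add: field_simps)
  moreover have "Y / W \<ge> 0" using Wpos unfolding Y_def by (simp add: sum_nonneg)
  ultimately show ?thesis by simp
qed

definition fro :: "nat \<Rightarrow> (nat \<Rightarrow> nat \<Rightarrow> complex) \<Rightarrow> real" where
  "fro d f = L2_set (\<lambda>p. cmod (f (fst p) (snd p))) ({..<d} \<times> {..<d})"

lemma fro_sq: "(fro d f)\<^sup>2 = (\<Sum>i<d. \<Sum>k<d. (cmod (f i k))\<^sup>2)"
  unfolding fro_def L2_set_def
  by (simp add: sum_nonneg sum.cartesian_product case_prod_beta)

lemma fro_eq: "fro d f = sqrt (\<Sum>i<d. \<Sum>k<d. (cmod (f i k))\<^sup>2)"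
  by (metis fro_sq fro_def L2_set_nonneg real_sqrt_unique)

lemma trace_norm_fro:
  assumes X: "X \<in> carrier_mat d d"
  shows "trace_norm X \<le> sqrt (real d) * fro d (\<lambda>i k. X $$ (i,k)) \<and> fro d (\<lambda>i k. X $$ (i,k)) \<le> trace_norm X"
proof -
  let ?B = "cadj X * X"
  have Bc: "?B \<in> carrier_mat d d" by (metis mult_carrier_mat cadj_carrier X)
  obtain as where cp: "char_poly ?B = (\<Prod>a\<leftarrow>as. [:- a, 1:])" and len: "length as = d"
    using char_poly_factorized[OF Bc] by blast
  have tn: "trace_norm X = (\<Sum>l<d. sqrt (cmod (as ! l)))"
  proof -
    have "sum_mset (image_mset (\<lambda>z. sqrt (cmod z)) (mset as)) = sum_list (map (\<lambda>z. sqrt (cmod z)) as)"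
      by (metis mset_map sum_mset_sum_list)
    also have "\<dots> = (\<Sum>l<d. sqrt (cmod (as ! l)))"
      by (simp add: sum_list_sum_nth len atLeast0LessThan)
    finally show ?thesis unfolding trace_norm_def cp proots_lin_prod .
  qed
  have nn: "as ! l = complex_of_real (Re (as ! l)) \<and> Re (as ! l) \<ge> 0" if l: "l < d" for l
  proof -
    have "as ! l \<in> set as" using l len by auto
    then have "poly (char_poly ?B) (as ! l) = 0"
      unfolding cp poly_prod_list by (auto simp: prod_list_zero_iff)
    then have "eigenvalue ?B (as ! l)" using eigenvalue_root_char_poly[OF Bc] by simp
    then obtain w where "eigenvector ?B w (as ! l)" unfolding eigenvalue_def by blast
    then show ?thesis using eig_nonneg[OF X] by blast
  qed
  obtain B' P Q where sd: "schur_decomposition ?B as = (B',P,Q)" by (cases "schur_decomposition ?B as") auto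
  from schur_decomposition[OF Bc cp sd] have sim: "similar_mat_wit ?B B' P Q" and dg: "diag_mat B' = as" by auto
  from sim Bc have P: "P \<in> carrier_mat d d" and Q: "Q \<in> carrier_mat d d" and B': "B' \<in> carrier_mat d d"
    and QP: "Q * P = 1\<^sub>m d" and eqB: "?B = P * B' * Q"
    unfolding similar_mat_wit_def Let_def by auto
  have "mtrace ?B = mtrace (Q * (P * B'))"
    unfolding eqB by (rule mtrace_comm[of _ d d]) (use P B' Q in auto)
  also have "Q * (P * B') = (Q * P) * B'" using P Q B' by (simp add: assoc_mult_mat)
  also have "\<dots> = B'" using QP B' by simp
  finally have "mtrace ?B = mtrace B'" .
  also have "\<dots> = sum_list as" unfolding dg[symmetric] mtrace_def diag_mat_def
    by (simp add: sum_list_sum_nth atLeast0LessThan)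
  finally have tr1: "mtrace ?B = sum_list as" .
  have sq: "cnj z * z = complex_of_real ((cmod z)\<^sup>2)" for z :: complex
    by (metis complex_norm_square mult.commute of_real_power)
  have "mtrace ?B = (\<Sum>i<d. \<Sum>k<d. cnj (X $$ (k,i)) * X $$ (k,i))"
    unfolding mtrace_def using Bc by (auto simp: cadj_mult_index[OF X] intro!: sum.cong)
  also have "\<dots> = complex_of_real (\<Sum>i<d. \<Sum>k<d. (cmod (X $$ (k,i)))\<^sup>2)"
    by (simp add: sq)
  also have "(\<Sum>i<d. \<Sum>k<d. (cmod (X $$ (k,i)))\<^sup>2) = (fro d (\<lambda>i k. X $$ (i,k)))\<^sup>2"
    unfolding fro_sq by (rule sum.swap)
  finally have tr2: "sum_list as = complex_of_real ((fro d (\<lambda>i k. X $$ (i,k)))\<^sup>2)" using tr1 by simp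
  define s where "s l = cmod (as ! l)" for l
  have s_nn: "s l \<ge> 0" for l unfolding s_def by simp
  have "sum_list as = (\<Sum>l<d. as ! l)" by (simp add: sum_list_sum_nth len atLeast0LessThan)
  also have "\<dots> = (\<Sum>l<d. complex_of_real (s l))"
    using nn unfolding s_def by (intro sum.cong refl) (metis abs_of_nonneg lessThan_iff norm_of_real)
  finally have "complex_of_real (\<Sum>l<d. s l) = complex_of_real ((fro d (\<lambda>i k. X $$ (i,k)))\<^sup>2)" using tr2 by simp
  then have "(\<Sum>l<d. s l) = (fro d (\<lambda>i k. X $$ (i,k)))\<^sup>2" using of_real_eq_iff by blast
  then have fr: "fro d (\<lambda>i k. X $$ (i,k)) = sqrt (\<Sum>l<d. s l)"
    by (metis fro_def L2_set_nonneg real_sqrt_unique)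
  have L2: "L2_set (\<lambda>l. sqrt (s l)) {..<d} = sqrt (\<Sum>l<d. s l)"
    unfolding L2_set_def using s_nn by simp
  have tn2: "trace_norm X = (\<Sum>l<d. sqrt (s l))" unfolding tn s_def ..
  have a: "(\<Sum>l<d. \<bar>sqrt (s l)\<bar> * \<bar>1\<bar>) \<le> L2_set (\<lambda>l. sqrt (s l)) {..<d} * L2_set (\<lambda>l. 1) {..<d}"
    by (rule L2_set_mult_ineq)
  have b: "L2_set (\<lambda>l. sqrt (s l)) {..<d} \<le> (\<Sum>l<d. sqrt (s l))"
    by (rule L2_set_le_sum) (simp add: s_nn)
  show ?thesis
    using a b unfolding tn2 fr L2 L2_set_constant by (simp add: mult.commute s_nn)
qed

definition qf :: "nat \<Rightarrow> (nat \<Rightarrow> nat \<Rightarrow> complex) \<Rightarrow> (nat \<Rightarrow> complex) \<Rightarrow> complex" where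
  "qf n A x = (\<Sum>i<n. \<Sum>j<n. cnj (x i) * A i j * x j)"

definition hermf :: "nat \<Rightarrow> (nat \<Rightarrow> nat \<Rightarrow> complex) \<Rightarrow> bool" where
  "hermf n A \<longleftrightarrow> (\<forall>i<n. \<forall>j<n. A j i = cnj (A i j))"

definition psdf :: "nat \<Rightarrow> (nat \<Rightarrow> nat \<Rightarrow> complex) \<Rightarrow> bool" where
  "psdf n A \<longleftrightarrow> hermf n A \<and> (\<forall>x. 0 \<le> Re (qf n A x))"

lemma ifs:
  "cnj (if P then 1 else 0) = (if P then 1 else 0)"
  "a * (if P then 1 else 0) = (if P then a else (0::complex))"
  "(if P then 1 else 0) * a = (if P then a else (0::complex))"
  "a * (if P then b else 0) = (if P then a * b else (0::complex))"
  "(if P then b else 0) * a = (if P then b * a else (0::complex))"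
  "(\<Sum>j\<in>S. if P then f j else 0) = (if P then (\<Sum>j\<in>S. f j) else (0::complex))"
  "(if P \<and> Q then k else (0::complex)) = (if P then (if Q then k else 0) else 0)"
  by auto

lemma qf_shift:
  assumes c: "c < n" and herm: "hermf n A"
  shows "qf n A (\<lambda>i. x i + (if i = c then s else 0)) =
    qf n A x + s * cnj (\<Sum>j<n. A c j * x j) + cnj s * (\<Sum>j<n. A c j * x j) + cnj s * s * A c c"
proof -
  have e1: "cnj (x i + (if i = c then s else 0)) * A i j * (x j + (if j = c then s else 0)) =
     cnj (x i) * A i j * x j + (if j = c then cnj (x i) * A i c * s else 0)
     + (if i = c then cnj s * A c j * x j else 0) + (if i = c \<and> j = c then cnj s * s * A c c else 0)" for i j
    by (auto simp: algebra_simps)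
  have "qf n A (\<lambda>i. x i + (if i = c then s else 0)) =
     qf n A x + (\<Sum>i<n. cnj (x i) * A i c * s) + (\<Sum>j<n. cnj s * A c j * x j) + cnj s * s * A c c"
    unfolding qf_def e1 using c by (simp add: sum.distrib ifs)
  also have "(\<Sum>i<n. cnj (x i) * A i c * s) = (\<Sum>i<n. s * cnj (A c i * x i))"
  proof (rule sum.cong[OF refl])
    fix i assume "i \<in> {..<n}"
    then have "A i c = cnj (A c i)" using herm c unfolding hermf_def by blast
    then show "cnj (x i) * A i c * s = s * cnj (A c i * x i)" by simp
  qed
  also have "\<dots> = s * cnj (\<Sum>j<n. A c j * x j)"
    by (simp add: cnj_sum sum_distrib_left)
  also have "(\<Sum>j<n. cnj s * A c j * x j) = cnj s * (\<Sum>j<n. A c j * x j)"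
    by (simp add: sum_distrib_left mult_ac)
  finally show ?thesis .
qed

lemma qf_unit:
  assumes "j < n" shows "qf n A (\<lambda>i. if i = j then 1 else 0) = A j j"
  using assms unfolding qf_def by (simp add: ifs)

lemma psd_diag:
  assumes "psdf n A" "c < n"
  shows "A c c = complex_of_real (Re (A c c)) \<and> Re (A c c) \<ge> 0"
proof -
  have "A c c = cnj (A c c)" using assms unfolding psdf_def hermf_def by blast
  then have "Im (A c c) = 0" by (metis Reals_cnj_iff complex_is_Real_iff)
  moreover have "Re (A c c) \<ge> 0" using assms qf_unit[of c n A] unfolding psdf_def by metis
  ultimately show ?thesis by (simp add: complex_eq_iff)
qed

lemma psd_row_zero:
  assumes psd: "psdf n A" and c: "c < n" and a0: "A c c = 0" and j: "j < n"
  shows "A c j = 0"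
proof (rule ccontr)
  assume nz: "A c j \<noteq> 0"
  have herm: "hermf n A" using psd unfolding psdf_def by auto
  define x where "x = (\<lambda>i. if i = j then 1 else (0::complex))"
  define b where "b = A c j"
  have beta: "(\<Sum>k<n. A c k * x k) = b" unfolding x_def b_def using j
    by (simp add: ifs)
  define t where "t = (\<bar>Re (A j j)\<bar> + 1) / (2 * (cmod b)\<^sup>2)"
  have bpos: "(cmod b)\<^sup>2 > 0" using nz unfolding b_def by simp
  define s where "s = - complex_of_real t * b"
  have q1: "qf n A (\<lambda>i. x i + (if i = c then s else 0)) = A j j + (s * cnj b + cnj s * b)"
    using qf_shift[OF c herm, of x s] unfolding beta a0 x_def using qf_unit[OF j, of A] by (simp add: x_def ifs j b_def)
  have q2: "s * cnj b + cnj s * b = - complex_of_real (2 * t * (cmod b)\<^sup>2)"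
  proof -
    have bb: "b * cnj b = complex_of_real ((cmod b)\<^sup>2)" by (metis complex_norm_square of_real_power)
    show ?thesis unfolding s_def by (simp add: bb algebra_simps)
  qed
  have "Re (qf n A (\<lambda>i. x i + (if i = c then s else 0))) = Re (A j j) - 2 * t * (cmod b)\<^sup>2"
    unfolding q1 q2 by simp
  moreover have "2 * t * (cmod b)\<^sup>2 = \<bar>Re (A j j)\<bar> + 1" unfolding t_def using bpos by simp
  moreover have "0 \<le> Re (qf n A (\<lambda>i. x i + (if i = c then s else 0)))" using psd unfolding psdf_def by auto
  ultimately show False by linarith
qed

lemma psd_step_psd:
  assumes psd: "psdf n A" and c: "c < n" and apos: "Re (A c c) > 0"
    and w_def: "w = (\<lambda>i. A i c / complex_of_real (sqrt (Re (A c c))))"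
  shows "psdf n (\<lambda>i j. A i j - w i * cnj (w j))"
proof -
  have herm: "hermf n A" using psd unfolding psdf_def by auto
  define a where "a = Re (A c c)"
  have Acc: "A c c = complex_of_real a" using psd_diag[OF psd c] unfolding a_def by blast
  have apos': "a > 0" using apos unfolding a_def .
  have h2: "hermf n (\<lambda>i j. A i j - w i * cnj (w j))"
    unfolding hermf_def
  proof (intro allI impI)
    fix i j assume "i < n" "j < n"
    then have "A j i = cnj (A i j)" using herm unfolding hermf_def by blast
    then show "A j i - w j * cnj (w i) = cnj (A i j - w i * cnj (w j))" by simp
  qed
  have "0 \<le> Re (qf n (\<lambda>i j. A i j - w i * cnj (w j)) x)" for x
  proof -
    define b where "b = (\<Sum>j<n. A c j * x j)"
    define s where "s = - b / complex_of_real a"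
    have Aic: "A i c = cnj (A c i)" if "i < n" for i using herm that c unfolding hermf_def by blast
    have sa: "sqrt a * sqrt a = a" using apos' by simp
    have r2: "complex_of_real (sqrt a) * complex_of_real (sqrt a) = complex_of_real a"
      unfolding of_real_mult[symmetric] sa ..
    have "qf n (\<lambda>i j. A i j - w i * cnj (w j)) x = qf n A x - (\<Sum>i<n. \<Sum>j<n. cnj (x i) * (w i * cnj (w j)) * x j)"
    proof -
      have "cnj (x i) * (A i j - w i * cnj (w j)) * x j = cnj (x i) * A i j * x j - cnj (x i) * (w i * cnj (w j)) * x j" for i j
        by (simp add: algebra_simps)
      then show ?thesis unfolding qf_def by (simp add: sum_subtractf)
    qed
    also have "(\<Sum>i<n. \<Sum>j<n. cnj (x i) * (w i * cnj (w j)) * x j) = (\<Sum>i<n. cnj (x i) * w i) * (\<Sum>j<n. cnj (w j) * x j)"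
      by (simp add: sum_product mult_ac)
    also have "(\<Sum>j<n. cnj (w j) * x j) = (\<Sum>j<n. A c j * x j / complex_of_real (sqrt a))"
    proof (rule sum.cong[OF refl])
      fix j assume "j \<in> {..<n}" then have "A j c = cnj (A c j)" using Aic by auto
      then show "cnj (w j) * x j = A c j * x j / complex_of_real (sqrt a)" unfolding w_def a_def by simp
    qed
    also have "\<dots> = b / complex_of_real (sqrt a)" unfolding b_def by (simp add: sum_divide_distrib)
    also have "(\<Sum>i<n. cnj (x i) * w i) = (\<Sum>i<n. cnj (A c i * x i) / complex_of_real (sqrt a))"
    proof (rule sum.cong[OF refl])
      fix j assume "j \<in> {..<n}" then have "A j c = cnj (A c j)" using Aic by auto
      then show "cnj (x j) * w j = cnj (A c j * x j) / complex_of_real (sqrt a)" unfolding w_def a_def by (simp add: mult.commute)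
    qed
    also have "\<dots> = cnj b / complex_of_real (sqrt a)" unfolding b_def by (simp add: sum_divide_distrib cnj_sum)
    finally have e1: "qf n (\<lambda>i j. A i j - w i * cnj (w j)) x = qf n A x - cnj b * b / complex_of_real a"
      using r2 by (simp add: field_simps)
    have e2: "qf n A (\<lambda>i. x i + (if i = c then s else 0)) = qf n A x + s * cnj b + cnj s * b + cnj s * s * A c c"
      using qf_shift[OF c herm, of x s] unfolding b_def .
    have "s * cnj b + cnj s * b + cnj s * s * A c c = - cnj b * b / complex_of_real a"
      unfolding s_def Acc using apos' by (simp add: field_simps)
    then have e3: "qf n A (\<lambda>i. x i + (if i = c then s else 0)) = qf n A x + (- cnj b * b / complex_of_real a)"
      using e2 by (metis add.assoc)
    have "qf n (\<lambda>i j. A i j - w i * cnj (w j)) x = qf n A (\<lambda>i. x i + (if i = c then s else 0))"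
      unfolding e1 e3 by simp
    then show ?thesis using psd unfolding psdf_def by simp
  qed
  then show ?thesis using h2 unfolding psdf_def by auto
qed

lemma psd_decomp_aux:
  "\<forall>c A. c + t = n \<longrightarrow> psdf n A \<longrightarrow> (\<forall>i<n. \<forall>j<n. (i < c \<or> j < c) \<longrightarrow> A i j = 0) \<longrightarrow>
     (\<exists>(m::nat) W. \<forall>i<n. \<forall>j<n. A i j = (\<Sum>l<m. W l i * cnj (W l j)))"
proof (induction t)
  case 0
  show ?case
  proof (intro allI impI)
    fix c A assume "c + 0 = n" "psdf n A" and z: "\<forall>i<n. \<forall>j<n. (i < c \<or> j < c) \<longrightarrow> A i j = (0::complex)"
    then have z0: "\<forall>i<n. \<forall>j<n. A i j = 0" by auto
    show "\<exists>(m::nat) W. \<forall>i<n. \<forall>j<n. A i j = (\<Sum>l<m. W l i * cnj (W l j))"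
    proof -
      define W0 :: "nat \<Rightarrow> nat \<Rightarrow> complex" where "W0 = (\<lambda>_ _. 0)"
      have h: "\<forall>i<n. \<forall>j<n. A i j = (\<Sum>l<(0::nat). W0 l i * cnj (W0 l j))" using z0 by simp
      show ?thesis by (intro exI) (rule h)
    qed
  qed
next
  case (Suc t)
  show ?case
  proof (intro allI impI)
    fix c A assume cn: "c + Suc t = n" and psd: "psdf n A" and z: "\<forall>i<n. \<forall>j<n. (i < c \<or> j < c) \<longrightarrow> A i j = 0"
    have c: "c < n" using cn by auto
    have herm: "hermf n A" using psd unfolding psdf_def by auto
    have cn1: "Suc c + t = n" using cn by auto
    show "\<exists>(m::nat) W. \<forall>i<n. \<forall>j<n. A i j = (\<Sum>l<m. W l i * cnj (W l j))"
    proof (cases "Re (A c c) = 0")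
      case True
      have "A c c = complex_of_real (Re (A c c))" using psd_diag[OF psd c] by blast
      also have "complex_of_real (Re (A c c)) = 0" using True by simp
      finally have a0: "A c c = 0" .
      have rz: "A c j = 0" if "j < n" for j using psd_row_zero[OF psd c a0 that] .
      have "\<forall>i<n. \<forall>j<n. (i < Suc c \<or> j < Suc c) \<longrightarrow> A i j = 0"
      proof (intro allI impI)
        fix i j assume ij: "i < n" "j < n" "i < Suc c \<or> j < Suc c"
        show "A i j = 0"
        proof (cases "i < c \<or> j < c")
          case True then show ?thesis using z ij by blast
        next
          case False
          then have "i = c \<or> j = c" using ij by auto
          moreover have "A i c = 0"
          proof -
            have "A i c = cnj (A c i)" using herm ij c unfolding hermf_def by blast
            then show ?thesis using rz[of i] ij by simp
          qed
          ultimately show ?thesis using rz ij by auto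
        qed
      qed
      from Suc.IH[rule_format, OF cn1 psd this[rule_format]] show ?thesis .
    next
      case False
      then have apos: "Re (A c c) > 0" using psd_diag[OF psd c] by linarith
      define w where "w = (\<lambda>i. A i c / complex_of_real (sqrt (Re (A c c))))"
      define A' where "A' = (\<lambda>i j. A i j - w i * cnj (w j))"
      have psd': "psdf n A'" unfolding A'_def by (rule psd_step_psd[OF psd c apos w_def])
      have Acc: "A c c = complex_of_real (Re (A c c))" using psd_diag[OF psd c] by blast
      have sa: "sqrt (Re (A c c)) * sqrt (Re (A c c)) = Re (A c c)" using apos by simp
      have r2: "complex_of_real (sqrt (Re (A c c))) * complex_of_real (sqrt (Re (A c c))) = A c c"
        unfolding of_real_mult[symmetric] sa using Acc by (rule sym)
      have ccnj: "cnj (A c c) = A c c" using Acc complex_cnj_complex_of_real by metis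
      have acnz: "A c c \<noteq> 0" using apos by auto
      have rnz: "complex_of_real (sqrt (Re (A c c))) \<noteq> 0" using apos by simp
      have Aic: "A i c = cnj (A c i)" if "i < n" for i using herm that c unfolding hermf_def by blast
      have z': "\<forall>i<n. \<forall>j<n. (i < Suc c \<or> j < Suc c) \<longrightarrow> A' i j = 0"
      proof (intro allI impI)
        fix i j assume ij: "i < n" "j < n" "i < Suc c \<or> j < Suc c"
        show "A' i j = 0"
        proof (cases "i < c \<or> j < c")
          case True
          then have "A i j = 0" using z ij by blast
          moreover have "w i = 0 \<or> w j = 0"
          proof (cases "i < c")
            case True then have "A i c = 0" using z ij c by blast
            then show ?thesis unfolding w_def by simp
          next
            case False then have "j < c" using \<open>i < c \<or> j < c\<close> by simp
            then have "A j c = 0" using z ij c by blast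
            then show ?thesis unfolding w_def by simp
          qed
          ultimately show ?thesis unfolding A'_def by auto
        next
          case False
          then have "i = c \<or> j = c" using ij by auto
          then show ?thesis
          proof
            assume "i = c"
            have "w c * cnj (w j) = A c c * cnj (A j c) / (complex_of_real (sqrt (Re (A c c))) * complex_of_real (sqrt (Re (A c c))))"
              unfolding w_def by simp
            also have "\<dots> = A c j"
            proof -
              have "cnj (A j c) = A c j" using Aic[OF ij(2)] by simp
              then show ?thesis unfolding r2 using acnz by simp
            qed
            finally show ?thesis unfolding A'_def using \<open>i = c\<close> by simp
          next
            assume "j = c"
            have "w i * cnj (w c) = A i c * cnj (A c c) / (complex_of_real (sqrt (Re (A c c))) * complex_of_real (sqrt (Re (A c c))))"
              unfolding w_def by simp
            also have "\<dots> = A i c" unfolding r2 ccnj using acnz by simp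
            finally show ?thesis unfolding A'_def using \<open>j = c\<close> by simp
          qed
        qed
      qed
      have exW: "\<exists>(m::nat) W. \<forall>i<n. \<forall>j<n. A' i j = (\<Sum>l<m. W l i * cnj (W l j))"
        by (rule Suc.IH[rule_format, OF cn1 psd' z'[rule_format]])
      then obtain m :: nat where "\<exists>W. \<forall>i<n. \<forall>j<n. A' i j = (\<Sum>l<m. W l i * cnj (W l j))"
        by (rule exE)
      then obtain W where W: "\<forall>i<n. \<forall>j<n. A' i j = (\<Sum>l<m. W l i * cnj (W l j))"
        by (rule exE)
      define W' where "W' = W(m := w)"
      have h: "\<forall>i<n. \<forall>j<n. A i j = (\<Sum>l<Suc m. W' l i * cnj (W' l j))"
      proof (intro allI impI)
        fix i j assume "i < n" "j < n"
        then have "A' i j = (\<Sum>l<m. W l i * cnj (W l j))" using W by simp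
        moreover have "A i j = A' i j + w i * cnj (w j)" unfolding A'_def by simp
        ultimately have "A i j = (\<Sum>l<m. W l i * cnj (W l j)) + w i * cnj (w j)" by simp
        also have "(\<Sum>l<m. W l i * cnj (W l j)) = (\<Sum>l<m. W' l i * cnj (W' l j))"
          unfolding W'_def by (rule sum.cong) auto
        finally show "A i j = (\<Sum>l<Suc m. W' l i * cnj (W' l j))" by (simp add: W'_def)
      qed
      show ?thesis by (rule exI[of _ "Suc m"], rule exI[of _ W'], rule h)
    qed
  qed
qed

lemma psd_decomp:
  assumes "psdf n A"
  shows "\<exists>(m::nat) W. \<forall>i<n. \<forall>j<n. A i j = (\<Sum>l<m. W l i * cnj (W l j))"
  using psd_decomp_aux[of n n, rule_format, of 0 A] assms by auto

lemma fro_add: "fro d (\<lambda>i k. f i k + g i k) \<le> fro d f + fro d g"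
proof -
  have "fro d (\<lambda>i k. f i k + g i k) \<le> L2_set (\<lambda>p. cmod (f (fst p) (snd p)) + cmod (g (fst p) (snd p))) ({..<d} \<times> {..<d})"
    unfolding fro_def by (rule L2_set_mono) (auto intro: norm_triangle_ineq)
  also have "\<dots> \<le> fro d f + fro d g" unfolding fro_def by (rule L2_set_triangle_ineq)
  finally show ?thesis .
qed

lemma fro_scale: "fro d (\<lambda>i k. c * f i k) = cmod c * fro d f"
  unfolding fro_def norm_mult by (simp add: L2_set_right_distrib)

lemma fro_zero: "fro d (\<lambda>i k. 0) = 0"
  unfolding fro_def by (simp add: L2_set_0')

lemma fro_cong: "(\<And>i k. i < d \<Longrightarrow> k < d \<Longrightarrow> f i k = g i k) \<Longrightarrow> fro d f = fro d g"
  unfolding fro_def by (rule L2_set_cong) auto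

lemma fro_sum:
  assumes "finite J"
  shows "fro d (\<lambda>i k. \<Sum>j\<in>J. c j * g j i k) \<le> (\<Sum>j\<in>J. cmod (c j) * fro d (g j))"
  using assms
proof (induction J rule: finite_induct)
  case empty then show ?case by (simp add: fro_zero)
next
  case (insert x J)
  have "fro d (\<lambda>i k. \<Sum>j\<in>insert x J. c j * g j i k) = fro d (\<lambda>i k. c x * g x i k + (\<Sum>j\<in>J. c j * g j i k))"
    using insert by simp
  also have "\<dots> \<le> fro d (\<lambda>i k. c x * g x i k) + fro d (\<lambda>i k. \<Sum>j\<in>J. c j * g j i k)"
    by (rule fro_add)
  also have "\<dots> \<le> cmod (c x) * fro d (g x) + (\<Sum>j\<in>J. cmod (c j) * fro d (g j))"
    using insert by (simp add: fro_scale)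
  finally show ?case using insert by simp
qed

lemma fro_bound:
  assumes "\<And>i k. i < d \<Longrightarrow> k < d \<Longrightarrow> cmod (f i k) \<le> B"
  shows "fro d f \<le> real (d * d) * B"
proof -
  have "fro d f \<le> (\<Sum>p\<in>{..<d} \<times> {..<d}. \<bar>cmod (f (fst p) (snd p))\<bar>)"
    unfolding fro_def by (rule L2_set_le_sum_abs)
  also have "\<dots> \<le> (\<Sum>p\<in>{..<d} \<times> {..<d}. B)"
    by (rule sum_mono) (use assms in auto)
  also have "\<dots> = real (d * d) * B" by simp
  finally show ?thesis .
qed

lemma sum_add_idx: "(\<Sum>i<x + y. f i) = (\<Sum>i<x. f i) + (\<Sum>b<y. f (x + (b::nat)))"
  by (induction y) (simp_all add: add.assoc)

lemma sum_prod_idx: "(\<Sum>i<m * n. f i) = (\<Sum>a<m. \<Sum>b<n. f (a * n + (b::nat)))"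
proof (induction m)
  case 0 then show ?case by simp
next
  case (Suc m)
  have "(\<Sum>i<Suc m * n. f i) = (\<Sum>i<m * n + n. f i)" by (simp add: add.commute)
  also have "\<dots> = (\<Sum>i<m * n. f i) + (\<Sum>b<n. f (m * n + b))" by (rule sum_add_idx)
  finally show ?case using Suc by simp
qed

lemma idx_lt: "a < m \<Longrightarrow> b < n \<Longrightarrow> a * n + b < m * (n::nat)"
proof -
  assume "a < m" "b < n"
  then have "a * n + b < a * n + n" by simp
  also have "\<dots> = Suc a * n" by simp
  also have "\<dots> \<le> m * n" using \<open>a < m\<close> by (intro mult_right_mono) auto
  finally show ?thesis .
qed

lemma idx_div: "b < n \<Longrightarrow> (a * n + b) div n = (a::nat)"
  by simp

lemma idx_mod: "b < n \<Longrightarrow> (a * n + b) mod n = (b::nat)"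
  by simp

lemma braket_expand:
  assumes "v \<in> carrier_vec n" "X \<in> carrier_mat n n"
  shows "braket v (X *\<^sub>v v) = (\<Sum>i<n. \<Sum>k<n. cnj (v $ i) * X $$ (i,k) * v $ k)"
proof -
  have "braket v (X *\<^sub>v v) = (\<Sum>i<n. cnj (v $ i) * (X *\<^sub>v v) $ i)"
    unfolding braket_def using assms by simp
  also have "\<dots> = (\<Sum>i<n. cnj (v $ i) * (\<Sum>k<n. X $$ (i,k) * v $ k))"
  proof (rule sum.cong[OF refl])
    fix i assume "i \<in> {..<n}"
    then have "(X *\<^sub>v v) $ i = (\<Sum>k<n. X $$ (i,k) * v $ k)" using mv_index[OF assms(2,1)] by blast
    then show "cnj (v $ i) * (X *\<^sub>v v) $ i = cnj (v $ i) * (\<Sum>k<n. X $$ (i,k) * v $ k)" by simp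
  qed
  also have "\<dots> = (\<Sum>i<n. \<Sum>k<n. cnj (v $ i) * X $$ (i,k) * v $ k)"
    by (simp add: sum_distrib_left mult_ac)
  finally show ?thesis .
qed

lemma completeness:
  fixes v :: "nat \<Rightarrow> complex vec"
  assumes vc: "\<And>j. j < n \<Longrightarrow> v j \<in> carrier_vec n"
    and on: "\<And>j k. j < n \<Longrightarrow> k < n \<Longrightarrow> braket (v j) (v k) = (if j = k then 1 else 0)"
    and i: "i < n" and k: "k < n"
  shows "(\<Sum>j<n. v j $ k * cnj (v j $ i)) = (if k = i then 1 else 0)"
proof -
  define V where "V = mat n n (\<lambda>(i,j). v j $ i)"
  have Vc: "V \<in> carrier_mat n n" unfolding V_def by simp
  have "cadj V * V = 1\<^sub>m n"
  proof (rule eq_matI)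
    fix j l assume jl: "j < dim_row (1\<^sub>m n)" "l < dim_col (1\<^sub>m n)"
    then have "(cadj V * V) $$ (j,l) = (\<Sum>i<n. cnj (V $$ (i,j)) * V $$ (i,l))"
      using cadj_mult_index[OF Vc] by simp
    also have "\<dots> = braket (v j) (v l)"
      unfolding braket_def V_def using jl vc[of j] vc[of l] by (auto intro!: sum.cong)
    also have "\<dots> = 1\<^sub>m n $$ (j,l)" using on jl by simp
    finally show "(cadj V * V) $$ (j,l) = 1\<^sub>m n $$ (j,l)" .
  qed (use Vc cadj_carrier[OF Vc] in auto)
  then have "V * cadj V = 1\<^sub>m n"
    using mat_mult_left_right_inverse[OF cadj_carrier[OF Vc] Vc] by blast
  then have "(V * cadj V) $$ (k,i) = (if k = i then 1 else 0)" using i k by simp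
  moreover have "(V * cadj V) $$ (k,i) = (\<Sum>j<n. v j $ k * cnj (v j $ i))"
    using i k Vc cadj_carrier[OF Vc] unfolding V_def cadj_def
    by (auto simp: scalar_prod_def atLeast0LessThan intro!: sum.cong)
  ultimately show ?thesis by simp
qed

lemma density_carrier: "density d X \<Longrightarrow> X \<in> carrier_mat d d"
  unfolding density_def by auto

lemma density_psdf:
  assumes "density d X"
  shows "psdf d (\<lambda>i j. X $$ (i,j))"
proof -
  have Xc: "X \<in> carrier_mat d d" and ca: "cadj X = X" and pos: "\<And>v. v \<in> carrier_vec d \<Longrightarrow> 0 \<le> Re (braket v (X *\<^sub>v v))"
    using assms unfolding density_def by auto
  have "hermf d (\<lambda>i j. X $$ (i,j))" unfolding hermf_def
  proof (intro allI impI)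
    fix i j assume ij: "i < d" "j < d"
    have "X $$ (j,i) = cadj X $$ (j,i)" using ca by simp
    also have "\<dots> = cnj (X $$ (i,j))" unfolding cadj_def using ij Xc by auto
    finally show "X $$ (j,i) = cnj (X $$ (i,j))" .
  qed
  moreover have "0 \<le> Re (qf d (\<lambda>i j. X $$ (i,j)) x)" for x
  proof -
    have "braket (vec d x) (X *\<^sub>v vec d x) = qf d (\<lambda>i j. X $$ (i,j)) x"
      unfolding braket_expand[OF vec_carrier Xc] qf_def by (auto intro!: sum.cong)
    then show ?thesis using pos[OF vec_carrier] by metis
  qed
  ultimately show ?thesis unfolding psdf_def by auto
qed

lemma qf_real:
  assumes "hermf n A"
  shows "cnj (qf n A x) = qf n A x"
proof -
  have "cnj (qf n A x) = (\<Sum>i<n. \<Sum>j<n. x i * A j i * cnj (x j))"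
    unfolding qf_def cnj_sum
  proof (intro sum.cong refl)
    fix i j assume "i \<in> {..<n}" "j \<in> {..<n}"
    then have "A j i = cnj (A i j)" using assms unfolding hermf_def by blast
    then show "cnj (cnj (x i) * A i j * x j) = x i * A j i * cnj (x j)" by simp
  qed
  also have "\<dots> = (\<Sum>j<n. \<Sum>i<n. x i * A j i * cnj (x j))" by (rule sum.swap)
  also have "\<dots> = qf n A x" unfolding qf_def by (simp add: mult_ac)
  finally show ?thesis .
qed

lemma tensor_carrier: "tensor dS dB A B \<in> carrier_mat (dS * dB) (dS * dB)"
  unfolding tensor_def by simp

lemma tensor_idx:
  assumes "a < dS" "b < dB" "a' < dS" "b' < dB"
  shows "tensor dS dB A B $$ (a * dB + b, a' * dB + b') = A $$ (a,a') * B $$ (b,b')"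
  using assms unfolding tensor_def by (simp add: idx_lt)

lemma p_expand:
  assumes v: "v \<in> carrier_vec (dS * dB)"
  shows "braket v (tensor dS dB A B *\<^sub>v v) =
    (\<Sum>a<dS. \<Sum>b<dB. \<Sum>a'<dS. \<Sum>b'<dB. cnj (v $ (a * dB + b)) * (A $$ (a,a') * B $$ (b,b')) * v $ (a' * dB + b'))"
  unfolding braket_expand[OF v tensor_carrier] sum_prod_idx
  by (intro sum.cong refl) (simp add: tensor_idx)

lemma p_real_nonneg:
  assumes v: "v \<in> carrier_vec (dS * dB)" and rS: "density dS \<rho>S" and rB: "density dB \<rho>B"
  shows "braket v (tensor dS dB \<rho>S \<rho>B *\<^sub>v v) = complex_of_real (Re (braket v (tensor dS dB \<rho>S \<rho>B *\<^sub>v v)))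
     \<and> Re (braket v (tensor dS dB \<rho>S \<rho>B *\<^sub>v v)) \<ge> 0"
proof -
  obtain m :: nat where "\<exists>W. \<forall>i<dS. \<forall>j<dS. \<rho>S $$ (i,j) = (\<Sum>l<m. W l i * cnj (W l j))"
    using psd_decomp[OF density_psdf[OF rS]] by (rule exE)
  then obtain W where W: "\<forall>i<dS. \<forall>j<dS. \<rho>S $$ (i,j) = (\<Sum>l<m. W l i * cnj (W l j))"
    by (rule exE)
  define y where "y l b = (\<Sum>a<dS. cnj (W l a) * v $ (a * dB + b))" for l b
  define Q where "Q l = qf dB (\<lambda>i j. \<rho>B $$ (i,j)) (y l)" for l
  have pB: "psdf dB (\<lambda>i j. \<rho>B $$ (i,j))" by (rule density_psdf[OF rB])
  have "braket v (tensor dS dB \<rho>S \<rho>B *\<^sub>v v) =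
    (\<Sum>a<dS. \<Sum>b<dB. \<Sum>a'<dS. \<Sum>b'<dB. \<Sum>l<m. cnj (v $ (a * dB + b)) * W l a * cnj (W l a') * \<rho>B $$ (b,b') * v $ (a' * dB + b'))"
    unfolding p_expand[OF v]
    by (intro sum.cong refl) (simp add: W sum_distrib_left sum_distrib_right mult_ac)
  also have "\<dots> = (\<Sum>l<m. Q l)"
    unfolding Q_def qf_def y_def
    by (simp add: sum_distrib_left sum_distrib_right cnj_sum mult_ac
          sum.swap[of _ "{..<dS}" "{..<m}"] sum.swap[of _ "{..<dB}" "{..<m}"] sum.swap[of _ "{..<dS}" "{..<dB}"])
  finally have e: "braket v (tensor dS dB \<rho>S \<rho>B *\<^sub>v v) = (\<Sum>l<m. Q l)" .
  have Qr: "Q l = complex_of_real (Re (Q l)) \<and> Re (Q l) \<ge> 0" for l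
  proof -
    have "cnj (Q l) = Q l" unfolding Q_def by (rule qf_real) (use pB in \<open>simp add: psdf_def\<close>)
    then have "Im (Q l) = 0" by (metis Reals_cnj_iff complex_is_Real_iff)
    moreover have "Re (Q l) \<ge> 0" using pB unfolding psdf_def Q_def by blast
    ultimately show ?thesis by (simp add: complex_eq_iff)
  qed
  have "(\<Sum>l<m. Q l) = complex_of_real (\<Sum>l<m. Re (Q l))"
    unfolding of_real_sum by (rule sum.cong[OF refl]) (use Qr in blast)
  moreover have "(\<Sum>l<m. Re (Q l)) \<ge> 0" using Qr by (simp add: sum_nonneg)
  ultimately show ?thesis unfolding e by simp
qed

lemma mtrace_tensor:
  assumes "A \<in> carrier_mat dS dS" "B \<in> carrier_mat dB dB"
  shows "mtrace (tensor dS dB A B) = mtrace A * mtrace B"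
proof -
  have "mtrace (tensor dS dB A B) = (\<Sum>a<dS. \<Sum>b<dB. tensor dS dB A B $$ (a * dB + b, a * dB + b))"
    unfolding mtrace_def using tensor_carrier[of dS dB A B] by (simp add: sum_prod_idx)
  also have "\<dots> = (\<Sum>a<dS. \<Sum>b<dB. A $$ (a,a) * B $$ (b,b))"
    by (intro sum.cong refl) (simp add: tensor_idx)
  also have "\<dots> = mtrace A * mtrace B"
    unfolding mtrace_def using assms by (simp add: sum_product)
  finally show ?thesis .
qed

lemma sum_p_one:
  fixes v :: "nat \<Rightarrow> complex vec"
  assumes vc: "\<And>j. j < n \<Longrightarrow> v j \<in> carrier_vec n"
    and on: "\<And>j k. j < n \<Longrightarrow> k < n \<Longrightarrow> braket (v j) (v k) = (if j = k then 1 else 0)"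
    and X: "X \<in> carrier_mat n n"
  shows "(\<Sum>j<n. braket (v j) (X *\<^sub>v v j)) = mtrace X"
proof -
  have "(\<Sum>j<n. braket (v j) (X *\<^sub>v v j)) = (\<Sum>j<n. \<Sum>i<n. \<Sum>k<n. X $$ (i,k) * (v j $ k * cnj (v j $ i)))"
    by (intro sum.cong refl) (simp add: braket_expand[OF vc X] mult_ac)
  also have "\<dots> = (\<Sum>i<n. \<Sum>j<n. \<Sum>k<n. X $$ (i,k) * (v j $ k * cnj (v j $ i)))"
    by (rule sum.swap)
  also have "\<dots> = (\<Sum>i<n. \<Sum>k<n. \<Sum>j<n. X $$ (i,k) * (v j $ k * cnj (v j $ i)))"
    by (rule sum.cong[OF refl], rule sum.swap)
  also have "\<dots> = (\<Sum>i<n. \<Sum>k<n. X $$ (i,k) * (\<Sum>j<n. v j $ k * cnj (v j $ i)))"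
    by (simp add: sum_distrib_left)
  also have "\<dots> = (\<Sum>i<n. \<Sum>k<n. X $$ (i,k) * (if k = i then 1 else 0))"
    by (intro sum.cong refl) (simp add: completeness[OF vc on])
  also have "\<dots> = mtrace X" unfolding mtrace_def using X by (simp add: ifs)
  finally show ?thesis .
qed

lemma amgm2: "(x::real) * y \<le> (x\<^sup>2 + y\<^sup>2) / 2"
proof -
  have "2 * x * y \<le> x\<^sup>2 + y\<^sup>2" by (rule sum_squares_bound)
  then show ?thesis by (simp add: algebra_simps | linarith)
qed

definition pk :: "nat \<Rightarrow> complex vec \<Rightarrow> nat \<Rightarrow> nat \<Rightarrow> complex" where
  "pk dB w a a' = (\<Sum>b<dB. w $ (a * dB + b) * cnj (w $ (a' * dB + b)))"

lemma sum_mats_idx: "i < n \<Longrightarrow> k < n \<Longrightarrow> sum_mats n f S $$ (i,k) = (\<Sum>j\<in>S. f j $$ (i,k))"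
  unfolding sum_mats_def by simp

lemma sum_mats_dims[simp]: "dim_row (sum_mats n f S) = n" "dim_col (sum_mats n f S) = n"
  unfolding sum_mats_def by simp_all

lemma cnj_sq: "cnj z * z = complex_of_real ((cmod z)\<^sup>2)"
  by (metis complex_norm_square mult.commute of_real_power)

lemma sum_mats_carrier: "sum_mats n f S \<in> carrier_mat n n"
  unfolding sum_mats_def by simp

lemma ketbra_idx: "v \<in> carrier_vec n \<Longrightarrow> i < n \<Longrightarrow> k < n \<Longrightarrow> ketbra v $$ (i,k) = v $ i * cnj (v $ k)"
  unfolding ketbra_def by auto

lemma ketbra_carrier: "v \<in> carrier_vec n \<Longrightarrow> ketbra v \<in> carrier_mat n n"
  unfolding ketbra_def by auto

lemma ptrace_idx: "a < dS \<Longrightarrow> a' < dS \<Longrightarrow> ptrace_B dS dB R $$ (a,a') = (\<Sum>b<dB. R $$ (a * dB + b, a' * dB + b))"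
  unfolding ptrace_B_def by simp

lemma ptrace_dims[simp]: "dim_row (ptrace_B dS dB R) = dS" "dim_col (ptrace_B dS dB R) = dS"
  unfolding ptrace_B_def by simp_all

lemma ptrace_carrier: "ptrace_B dS dB R \<in> carrier_mat dS dS"
  unfolding ptrace_B_def by simp

lemma ptrace_ketbra:
  assumes "v \<in> carrier_vec (dS * dB)" "a < dS" "a' < dS"
  shows "ptrace_B dS dB (ketbra v) $$ (a,a') = pk dB v a a'"
  unfolding ptrace_idx[OF assms(2,3)] pk_def
  by (rule sum.cong[OF refl]) (simp add: ketbra_idx[OF assms(1)] idx_lt assms)

lemma ptrace_omega:
  assumes vc: "\<And>j. j \<in> J \<Longrightarrow> v j \<in> carrier_vec (dS * dB)" and a: "a < dS" "a' < dS"
  shows "ptrace_B dS dB (sum_mats (dS * dB) (\<lambda>j. c j \<cdot>\<^sub>m ketbra (v j)) J) $$ (a,a') = (\<Sum>j\<in>J. c j * pk dB (v j) a a')"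
proof -
  have "ptrace_B dS dB (sum_mats (dS * dB) (\<lambda>j. c j \<cdot>\<^sub>m ketbra (v j)) J) $$ (a,a') =
     (\<Sum>b<dB. \<Sum>j\<in>J. c j * (v j $ (a * dB + b) * cnj (v j $ (a' * dB + b))))"
    unfolding ptrace_idx[OF a]
  proof (intro sum.cong refl)
    fix b assume b: "b \<in> {..<dB}"
    have i1: "a * dB + b < dS * dB" "a' * dB + b < dS * dB" using a b by (auto intro: idx_lt)
    show "sum_mats (dS * dB) (\<lambda>j. c j \<cdot>\<^sub>m ketbra (v j)) J $$ (a * dB + b, a' * dB + b) =
       (\<Sum>j\<in>J. c j * (v j $ (a * dB + b) * cnj (v j $ (a' * dB + b))))"
      unfolding sum_mats_idx[OF i1]
    proof (intro sum.cong refl)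
      fix j assume j: "j \<in> J"
      have kc: "ketbra (v j) \<in> carrier_mat (dS * dB) (dS * dB)" using ketbra_carrier[OF vc[OF j]] .
      show "(c j \<cdot>\<^sub>m ketbra (v j)) $$ (a * dB + b, a' * dB + b) = c j * (v j $ (a * dB + b) * cnj (v j $ (a' * dB + b)))"
        using kc i1 by (simp add: ketbra_idx[OF vc[OF j]])
    qed
  qed
  also have "\<dots> = (\<Sum>j\<in>J. c j * pk dB (v j) a a')"
    unfolding pk_def by (subst sum.swap) (simp add: sum_distrib_left)
  finally show ?thesis .
qed

lemma ptrace_rhomc:
  assumes vc: "\<And>j. j \<in> J \<Longrightarrow> v j \<in> carrier_vec (dS * dB)" and a: "a < dS" "a' < dS"
  shows "ptrace_B dS dB (k \<cdot>\<^sub>m sum_mats (dS * dB) (\<lambda>j. ketbra (v j)) J) $$ (a,a') = k * (\<Sum>j\<in>J. pk dB (v j) a a')"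
proof -
  have "ptrace_B dS dB (k \<cdot>\<^sub>m sum_mats (dS * dB) (\<lambda>j. ketbra (v j)) J) $$ (a,a') =
     (\<Sum>b<dB. k * (\<Sum>j\<in>J. (v j $ (a * dB + b) * cnj (v j $ (a' * dB + b)))))"
    unfolding ptrace_idx[OF a]
  proof (intro sum.cong refl)
    fix b assume b: "b \<in> {..<dB}"
    have i1: "a * dB + b < dS * dB" "a' * dB + b < dS * dB" using a b by (auto intro: idx_lt)
    have "(k \<cdot>\<^sub>m sum_mats (dS * dB) (\<lambda>j. ketbra (v j)) J) $$ (a * dB + b, a' * dB + b)
        = k * sum_mats (dS * dB) (\<lambda>j. ketbra (v j)) J $$ (a * dB + b, a' * dB + b)"
      using i1 by simp
    also have "\<dots> = k * (\<Sum>j\<in>J. (v j $ (a * dB + b) * cnj (v j $ (a' * dB + b))))"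
      unfolding sum_mats_idx[OF i1] using i1 by (simp add: ketbra_idx[OF vc])
    finally show "(k \<cdot>\<^sub>m sum_mats (dS * dB) (\<lambda>j. ketbra (v j)) J) $$ (a * dB + b, a' * dB + b) =
       k * (\<Sum>j\<in>J. (v j $ (a * dB + b) * cnj (v j $ (a' * dB + b))))" .
  qed
  also have "\<dots> = k * (\<Sum>j\<in>J. pk dB (v j) a a')"
    unfolding pk_def by (simp add: sum_distrib_left[symmetric]) (subst sum.swap, simp)
  finally show ?thesis .
qed

lemma norm_sq_one:
  assumes "v \<in> carrier_vec n" "braket v v = 1"
  shows "(\<Sum>i<n. (cmod (v $ i))\<^sup>2) = 1"
proof -
  have "braket v v = (\<Sum>i<n. complex_of_real ((cmod (v $ i))\<^sup>2))"
    unfolding braket_def using assms(1)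
    by (intro sum.cong) (auto simp: cnj_sq)
  then have "complex_of_real (\<Sum>i<n. (cmod (v $ i))\<^sup>2) = 1" using assms(2) by simp
  then show ?thesis using of_real_eq_1_iff by blast
qed

lemma pk_bound:
  assumes v: "v \<in> carrier_vec (dS * dB)" and nv: "braket v v = 1" and a: "a < dS" "a' < dS"
  shows "cmod (pk dB v a a') \<le> 1"
proof -
  have blk: "(\<Sum>b<dB. (cmod (v $ (c * dB + b)))\<^sup>2) \<le> 1" if c: "c < dS" for c
  proof -
    have "(\<Sum>b<dB. (cmod (v $ (c * dB + b)))\<^sup>2) \<le> (\<Sum>c'<dS. \<Sum>b<dB. (cmod (v $ (c' * dB + b)))\<^sup>2)"
      by (rule member_le_sum[of c "{..<dS}" "\<lambda>c'. \<Sum>b<dB. (cmod (v $ (c' * dB + b)))\<^sup>2", simplified])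
         (use c in \<open>auto intro: sum_nonneg\<close>)
    also have "\<dots> = 1" using norm_sq_one[OF v nv] by (simp add: sum_prod_idx)
    finally show ?thesis .
  qed
  have "cmod (pk dB v a a') \<le> (\<Sum>b<dB. cmod (v $ (a * dB + b)) * cmod (v $ (a' * dB + b)))"
    unfolding pk_def by (rule order_trans[OF norm_sum]) (simp add: norm_mult)
  also have "\<dots> \<le> (\<Sum>b<dB. ((cmod (v $ (a * dB + b)))\<^sup>2 + (cmod (v $ (a' * dB + b)))\<^sup>2) / 2)"
    by (rule sum_mono) (rule amgm2)
  also have "\<dots> = ((\<Sum>b<dB. (cmod (v $ (a * dB + b)))\<^sup>2) + (\<Sum>b<dB. (cmod (v $ (a' * dB + b)))\<^sup>2)) / 2"
    by (simp only: sum_divide_distrib[symmetric] sum.distrib)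
  also have "\<dots> \<le> 1" using blk[OF a(1)] blk[OF a(2)] by simp
  finally show ?thesis .
qed

lemma mm_index:
  assumes "A \<in> carrier_mat n m" "B \<in> carrier_mat m l" "i < n" "j < l"
  shows "(A * B) $$ (i,j) = (\<Sum>k<m. A $$ (i,k) * B $$ (k,j))"
  using assms by (auto simp: scalar_prod_def atLeast0LessThan intro!: sum.cong)

lemma trace_Pout:
  fixes v :: "nat \<Rightarrow> complex vec"
  assumes vc: "\<And>j. j < n \<Longrightarrow> v j \<in> carrier_vec n" and X: "X \<in> carrier_mat n n" and Ot: "Ot \<subseteq> {..<n}"
  shows "mtrace (sum_mats n (\<lambda>j. ketbra (v j)) Ot * X) = (\<Sum>j\<in>Ot. braket (v j) (X *\<^sub>v v j))"
proof -
  have fO: "finite Ot" using Ot finite_subset by blast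
  have "mtrace (sum_mats n (\<lambda>j. ketbra (v j)) Ot * X) = (\<Sum>i<n. \<Sum>k<n. \<Sum>j\<in>Ot. v j $ i * cnj (v j $ k) * X $$ (k,i))"
    unfolding mtrace_def
  proof (simp, intro sum.cong refl)
    fix i assume i: "i \<in> {..<n}"
    show "(sum_mats n (\<lambda>j. ketbra (v j)) Ot * X) $$ (i,i) = (\<Sum>k<n. \<Sum>j\<in>Ot. v j $ i * cnj (v j $ k) * X $$ (k,i))"
    proof -
      have "(sum_mats n (\<lambda>j. ketbra (v j)) Ot * X) $$ (i,i) = (\<Sum>k<n. sum_mats n (\<lambda>j. ketbra (v j)) Ot $$ (i,k) * X $$ (k,i))"
        using mm_index[OF sum_mats_carrier X] i by simp
      also have "\<dots> = (\<Sum>k<n. \<Sum>j\<in>Ot. v j $ i * cnj (v j $ k) * X $$ (k,i))"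
      proof (intro sum.cong refl)
        fix k assume k: "k \<in> {..<n}"
        have "sum_mats n (\<lambda>j. ketbra (v j)) Ot $$ (i,k) = (\<Sum>j\<in>Ot. v j $ i * cnj (v j $ k))"
        proof -
          have "sum_mats n (\<lambda>j. ketbra (v j)) Ot $$ (i,k) = (\<Sum>j\<in>Ot. ketbra (v j) $$ (i,k))"
            using sum_mats_idx i k by simp
          also have "\<dots> = (\<Sum>j\<in>Ot. v j $ i * cnj (v j $ k))"
          proof (rule sum.cong[OF refl])
            fix j assume "j \<in> Ot" then have "j < n" using Ot by auto
            then show "ketbra (v j) $$ (i,k) = v j $ i * cnj (v j $ k)" using ketbra_idx[OF vc] i k by simp
          qed
          finally show ?thesis .
        qed
        then show "sum_mats n (\<lambda>j. ketbra (v j)) Ot $$ (i,k) * X $$ (k,i) = (\<Sum>j\<in>Ot. v j $ i * cnj (v j $ k) * X $$ (k,i))"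
          by (simp add: sum_distrib_right)
      qed
      finally show ?thesis .
    qed
  qed
  also have "\<dots> = (\<Sum>i<n. \<Sum>j\<in>Ot. \<Sum>k<n. v j $ i * cnj (v j $ k) * X $$ (k,i))"
    by (rule sum.cong[OF refl], rule sum.swap)
  also have "\<dots> = (\<Sum>j\<in>Ot. \<Sum>i<n. \<Sum>k<n. v j $ i * cnj (v j $ k) * X $$ (k,i))"
    by (rule sum.swap)
  also have "\<dots> = (\<Sum>j\<in>Ot. \<Sum>k<n. \<Sum>i<n. v j $ i * cnj (v j $ k) * X $$ (k,i))"
    by (rule sum.cong[OF refl], rule sum.swap)
  also have "\<dots> = (\<Sum>j\<in>Ot. braket (v j) (X *\<^sub>v v j))"
  proof (rule sum.cong[OF refl])
    fix j assume "j \<in> Ot"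
    then have "j < n" using Ot by auto
    then show "(\<Sum>k<n. \<Sum>i<n. v j $ i * cnj (v j $ k) * X $$ (k,i)) = braket (v j) (X *\<^sub>v v j)"
      using braket_expand[OF vc X] by (simp add: mult_ac)
  qed
  finally show ?thesis .
qed

lemma per_N:
  fixes dS dB :: nat and v :: "nat \<Rightarrow> complex vec" and \<rho>S \<rho>B :: "complex mat" and M :: "nat set" and \<epsilon> :: real
  assumes vc: "\<And>j. j < dS * dB \<Longrightarrow> v j \<in> carrier_vec (dS * dB)"
    and on: "\<And>j k. j < dS * dB \<Longrightarrow> k < dS * dB \<Longrightarrow> braket (v j) (v k) = (if j = k then 1 else 0)"
    and rS: "density dS \<rho>S" and rB: "density dB \<rho>B"
    and Msub: "M \<subseteq> {..<dS * dB}" and Mne: "M \<noteq> {}" and eps: "\<epsilon> \<ge> 0"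
  defines "\<rho>mc \<equiv> (1 / of_nat (card M)) \<cdot>\<^sub>m sum_mats (dS * dB) (\<lambda>j. ketbra (v j)) M"
    and "\<omega> \<equiv> sum_mats (dS * dB) (\<lambda>j. braket (v j) ((tensor dS dB \<rho>S \<rho>B) *\<^sub>v v j) \<cdot>\<^sub>m ketbra (v j)) {..<dS * dB}"
    and "Pout \<equiv> sum_mats (dS * dB) (\<lambda>j. ketbra (v j)) ({..<dS * dB} - M)"
    and "bad \<equiv> {j \<in> M. local_dist dS dB (ketbra (v j)) ((1 / of_nat (card M)) \<cdot>\<^sub>m sum_mats (dS * dB) (\<lambda>j. ketbra (v j)) M) > \<epsilon>}"
    and "S2 \<equiv> (\<Sum>j<dS * dB. (Re (braket (v j) ((tensor dS dB \<rho>S \<rho>B) *\<^sub>v v j)))\<^sup>2)"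
  shows "local_dist dS dB \<omega> \<rho>mc \<le> sqrt (real dS) * (real (dS * dS) * Re (mtrace (Pout * (tensor dS dB \<rho>S \<rho>B))) + \<epsilon> + real (dS * dS) * sqrt (real (card bad) * S2))
     \<and> S2 > 0"
proof -
  define n where "n = dS * dB"
  define p where "p j = braket (v j) ((tensor dS dB \<rho>S \<rho>B) *\<^sub>v v j)" for j
  define q where "q j = Re (p j)" for j
  have RHOc: "(tensor dS dB \<rho>S \<rho>B) \<in> carrier_mat n n" unfolding n_def by (rule tensor_carrier)
  have vc': "\<And>j. j < n \<Longrightarrow> v j \<in> carrier_vec n" using vc unfolding n_def .
  have on': "\<And>j k. j < n \<Longrightarrow> k < n \<Longrightarrow> braket (v j) (v k) = (if j = k then 1 else 0)" using on unfolding n_def .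
  have pq: "p j = complex_of_real (q j) \<and> q j \<ge> 0" if "j < n" for j
    using p_real_nonneg[OF vc[OF that[unfolded n_def]] rS rB] unfolding p_def q_def by blast
  have trS: "mtrace \<rho>S = 1" and trB: "mtrace \<rho>B = 1" using rS rB unfolding density_def by auto
  have sump: "(\<Sum>j<n. p j) = 1"
    using sum_p_one[OF vc' on' RHOc] mtrace_tensor[OF density_carrier[OF rS] density_carrier[OF rB]] trS trB by (simp add: p_def)
  have sumq: "(\<Sum>j<n. q j) = 1"
  proof -
    have "(\<Sum>j<n. q j) = Re (\<Sum>j<n. p j)" unfolding q_def by simp
    then show ?thesis using sump by simp
  qed
  have fM: "finite M" using Msub finite_subset by blast
  have cM: "card M > 0" using fM Mne by (simp add: card_gt_0_iff)
  define c where "c = (1 / of_nat (card M) :: complex)"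
  define R where "R a a' = c * (\<Sum>j\<in>M. pk dB (v j) a a')" for a a'
  have vM: "\<And>j. j \<in> M \<Longrightarrow> v j \<in> carrier_vec (dS * dB)" using vc Msub by auto
  have E1: "ptrace_B dS dB \<omega> $$ (a,a') = (\<Sum>j<n. p j * pk dB (v j) a a')" if "a < dS" "a' < dS" for a a'
    unfolding \<omega>_def p_def n_def by (rule ptrace_omega) (use vc that in auto)
  have E2: "ptrace_B dS dB \<rho>mc $$ (a,a') = R a a'" if "a < dS" "a' < dS" for a a'
    unfolding \<rho>mc_def R_def c_def by (rule ptrace_rhomc[OF vM that])
  have E3: "ptrace_B dS dB (ketbra (v j)) $$ (a,a') = pk dB (v j) a a'" if "j < n" "a < dS" "a' < dS" for j a a'
    by (rule ptrace_ketbra) (use vc' that n_def in auto)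
  have pkb: "cmod (pk dB (v j) a a') \<le> 1" if "j < n" "a < dS" "a' < dS" for j a a'
    by (rule pk_bound) (use vc' on' that n_def in auto)
  have Rb: "cmod (R a a') \<le> 1" if a: "a < dS" "a' < dS" for a a'
  proof -
    have "cmod (R a a') \<le> cmod c * (\<Sum>j\<in>M. cmod (pk dB (v j) a a'))"
      unfolding R_def norm_mult by (intro mult_left_mono norm_sum) simp
    also have "\<dots> \<le> cmod c * (\<Sum>j\<in>M. 1)"
      by (intro mult_left_mono sum_mono) (use pkb a Msub n_def in auto)
    also have "\<dots> = 1" unfolding c_def using cM by (simp add: norm_divide)
    finally show ?thesis .
  qed
  define F where "F j = fro dS (\<lambda>a a'. pk dB (v j) a a' - R a a')" for j
  have Fb: "F j \<le> real (dS * dS) * 2" if "j < n" for j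
    unfolding F_def
  proof (rule fro_bound)
    fix a a' assume a: "a < dS" "a' < dS"
    have "cmod (pk dB (v j) a a' - R a a') \<le> cmod (pk dB (v j) a a') + cmod (R a a')" by (rule norm_triangle_ineq4)
    also have "\<dots> \<le> 2" using pkb[OF that a] Rb[OF a] by simp
    finally show "cmod (pk dB (v j) a a' - R a a') \<le> 2" .
  qed
  have ptc: "\<And>X. ptrace_B dS dB X \<in> carrier_mat dS dS" by (rule ptrace_carrier)
  have Fgood: "F j \<le> 2 * \<epsilon>" if j: "j \<in> M" "j \<notin> bad" for j
  proof -
    have jn: "j < n" using j Msub n_def by auto
    let ?D = "ptrace_B dS dB (ketbra (v j)) - ptrace_B dS dB \<rho>mc"
    have Dc: "?D \<in> carrier_mat dS dS" by (rule minus_carrier_mat[OF ptc])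
    have "F j = fro dS (\<lambda>a a'. ?D $$ (a,a'))"
      unfolding F_def by (rule fro_cong) (use E2 E3[OF jn] in simp)
    also have "\<dots> \<le> trace_norm ?D" using trace_norm_fro[OF Dc] by blast
    also have "\<dots> = 2 * local_dist dS dB (ketbra (v j)) \<rho>mc" unfolding local_dist_def by simp
    also have "\<dots> \<le> 2 * \<epsilon>" using j unfolding bad_def \<rho>mc_def by auto
    finally show ?thesis .
  qed
  let ?D = "ptrace_B dS dB \<omega> - ptrace_B dS dB \<rho>mc"
  have Dc: "?D \<in> carrier_mat dS dS" by (rule minus_carrier_mat[OF ptc])
  have Dent: "?D $$ (a,a') = (\<Sum>j<n. complex_of_real (q j) * (pk dB (v j) a a' - R a a'))" if a: "a < dS" "a' < dS" for a a'
  proof -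
    have "?D $$ (a,a') = (\<Sum>j<n. p j * pk dB (v j) a a') - R a a'" using ptc a E1 E2 by simp
    also have "\<dots> = (\<Sum>j<n. p j * pk dB (v j) a a') - (\<Sum>j<n. p j) * R a a'" using sump by simp
    also have "\<dots> = (\<Sum>j<n. p j * (pk dB (v j) a a' - R a a'))"
      by (simp add: sum_distrib_right[symmetric] sum_subtractf right_diff_distrib)
    also have "\<dots> = (\<Sum>j<n. complex_of_real (q j) * (pk dB (v j) a a' - R a a'))"
      by (rule sum.cong[OF refl]) (use pq in auto)
    finally show ?thesis .
  qed
  have "fro dS (\<lambda>a a'. ?D $$ (a,a')) = fro dS (\<lambda>a a'. \<Sum>j<n. complex_of_real (q j) * (pk dB (v j) a a' - R a a'))"
    by (rule fro_cong) (use Dent in simp)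
  also have "\<dots> \<le> (\<Sum>j<n. cmod (complex_of_real (q j)) * F j)"
    unfolding F_def by (rule fro_sum) simp
  also have "\<dots> = (\<Sum>j<n. q j * F j)"
    by (rule sum.cong[OF refl]) (use pq in auto)
  finally have fD: "fro dS (\<lambda>a a'. ?D $$ (a,a')) \<le> (\<Sum>j<n. q j * F j)" .
  define Ot where "Ot = {..<n} - M"
  have Mn: "M \<subseteq> {..<n}" using Msub n_def by simp
  have bM: "bad \<subseteq> M" unfolding bad_def by auto
  have fb: "finite bad" using bM fM finite_subset by blast
  have split1: "(\<Sum>j<n. q j * F j) = (\<Sum>j\<in>Ot. q j * F j) + (\<Sum>j\<in>M. q j * F j)"
    unfolding Ot_def using sum.subset_diff[OF Mn] by simp
  have split2: "(\<Sum>j\<in>M. q j * F j) = (\<Sum>j\<in>M - bad. q j * F j) + (\<Sum>j\<in>bad. q j * F j)"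
    using sum.subset_diff[OF bM fM] by simp
  have qn: "q j \<ge> 0" if "j < n" for j using pq that by blast
  have qF: "q j * F j \<le> real (dS * dS) * 2 * q j" if "j < n" for j
  proof -
    have "q j * F j \<le> q j * (real (dS * dS) * 2)" by (rule mult_left_mono[OF Fb[OF that] qn[OF that]])
    then show ?thesis by (simp add: mult.commute)
  qed
  have t1: "(\<Sum>j\<in>Ot. q j * F j) \<le> real (dS * dS) * 2 * (\<Sum>j\<in>Ot. q j)"
    unfolding sum_distrib_left
    by (rule sum_mono) (use qF Ot_def in auto)
  have t2: "(\<Sum>j\<in>M - bad. q j * F j) \<le> 2 * \<epsilon>"
  proof -
    have "(\<Sum>j\<in>M - bad. q j * F j) \<le> (\<Sum>j\<in>M - bad. q j * (2 * \<epsilon>))"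
      by (rule sum_mono) (use Fgood qn Mn in \<open>auto intro: mult_left_mono\<close>)
    also have "\<dots> = 2 * \<epsilon> * (\<Sum>j\<in>M - bad. q j)" by (simp add: sum_distrib_left mult.commute)
    also have "(\<Sum>j\<in>M - bad. q j) \<le> (\<Sum>j<n. q j)"
      by (rule sum_mono2) (use Mn qn in auto)
    then have "2 * \<epsilon> * (\<Sum>j\<in>M - bad. q j) \<le> 2 * \<epsilon>" using sumq eps by (simp add: mult_left_le)
    finally show ?thesis .
  qed
  have t3: "(\<Sum>j\<in>bad. q j * F j) \<le> real (dS * dS) * 2 * sqrt (real (card bad) * S2)"
  proof -
    have "(\<Sum>j\<in>bad. q j * F j) \<le> real (dS * dS) * 2 * (\<Sum>j\<in>bad. q j)"
      unfolding sum_distrib_left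
      by (rule sum_mono) (use qF bM Mn in auto)
    also have "(\<Sum>j\<in>bad. q j) \<le> sqrt (real (card bad) * S2)"
    proof -
      have "(\<Sum>j\<in>bad. \<bar>q j\<bar> * \<bar>1\<bar>) \<le> L2_set q bad * L2_set (\<lambda>j. 1) bad" by (rule L2_set_mult_ineq)
      moreover have "(\<Sum>j\<in>bad. \<bar>q j\<bar> * \<bar>1\<bar>) = (\<Sum>j\<in>bad. q j)"
        by (rule sum.cong[OF refl]) (use qn bM Mn in auto)
      moreover have "L2_set q bad \<le> sqrt S2"
      proof -
        have "(\<Sum>j\<in>bad. (q j)\<^sup>2) \<le> (\<Sum>j<n. (q j)\<^sup>2)"
          by (rule sum_mono2) (use bM Mn in auto)
        moreover have "S2 = (\<Sum>j<n. (q j)\<^sup>2)" unfolding S2_def q_def p_def n_def ..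
        ultimately show ?thesis unfolding L2_set_def by simp
      qed
      moreover have "L2_set (\<lambda>j. 1) bad = sqrt (real (card bad))" by (simp add: L2_set_constant)
      ultimately have "(\<Sum>j\<in>bad. q j) \<le> sqrt S2 * sqrt (real (card bad))"
        by (smt (verit, best) L2_set_nonneg mult_right_mono real_sqrt_ge_zero)
      then show ?thesis by (simp add: real_sqrt_mult mult.commute)
    qed
    then have "real (dS * dS) * 2 * (\<Sum>j\<in>bad. q j) \<le> real (dS * dS) * 2 * sqrt (real (card bad) * S2)"
      by (intro mult_left_mono) auto
    finally show ?thesis .
  qed
  have tO: "Re (mtrace (Pout * (tensor dS dB \<rho>S \<rho>B))) = (\<Sum>j\<in>Ot. q j)"
  proof -
    have "mtrace (Pout * (tensor dS dB \<rho>S \<rho>B)) = (\<Sum>j\<in>Ot. p j)"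
      unfolding Pout_def p_def Ot_def n_def[symmetric] by (rule trace_Pout[OF vc' RHOc]) auto
    then show ?thesis unfolding q_def by simp
  qed
  define X where "X = real (dS * dS) * Re (mtrace (Pout * (tensor dS dB \<rho>S \<rho>B))) + \<epsilon> + real (dS * dS) * sqrt (real (card bad) * S2)"
  have "local_dist dS dB \<omega> \<rho>mc = trace_norm ?D / 2" unfolding local_dist_def ..
  also have "\<dots> \<le> sqrt (real dS) * fro dS (\<lambda>a a'. ?D $$ (a,a')) / 2"
    using trace_norm_fro[OF Dc] by (simp add: divide_right_mono)
  also have "\<dots> \<le> sqrt (real dS) * (\<Sum>j<n. q j * F j) / 2"
    using fD by (simp add: divide_right_mono mult_left_mono)
  also have "(\<Sum>j<n. q j * F j) \<le> 2 * X"
    unfolding X_def using split1 split2 t1 t2 t3 tO by (simp add: algebra_simps)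
  then have "sqrt (real dS) * (\<Sum>j<n. q j * F j) \<le> sqrt (real dS) * (2 * X)"
    by (rule mult_left_mono) simp
  then have "sqrt (real dS) * (\<Sum>j<n. q j * F j) / 2 \<le> sqrt (real dS) * X"
    by simp
  finally have main: "local_dist dS dB \<omega> \<rho>mc \<le> sqrt (real dS) * (real (dS * dS) * Re (mtrace (Pout * (tensor dS dB \<rho>S \<rho>B))) + \<epsilon> + real (dS * dS) * sqrt (real (card bad) * S2))" unfolding X_def .
  have "S2 > 0"
  proof (rule ccontr)
    assume "\<not> S2 > 0"
    moreover have "S2 = (\<Sum>j<n. (q j)\<^sup>2)" unfolding S2_def q_def p_def n_def ..
    ultimately have "(\<Sum>j<n. (q j)\<^sup>2) = 0" by (simp add: sum_nonneg eq_iff)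
    then have "\<forall>j\<in>{..<n}. (q j)\<^sup>2 = 0" by (subst (asm) sum_nonneg_eq_0_iff) auto
    then have "(\<Sum>j<n. q j) = 0" by simp
    then show False using sumq by simp
  qed
  then show ?thesis using main by blast
qed

theorem lemma2:
  fixes dS :: nat and dB :: "nat \<Rightarrow> nat"
    and H :: "nat \<Rightarrow> complex mat"
    and E :: "nat \<Rightarrow> nat \<Rightarrow> real" and v :: "nat \<Rightarrow> nat \<Rightarrow> complex vec"
    and \<rho>S \<rho>B :: "nat \<Rightarrow> complex mat"
    and u \<alpha> :: real and \<Delta> :: "nat \<Rightarrow> real"
    and M :: "nat \<Rightarrow> nat set" and Dmc :: "nat \<Rightarrow> nat"
    and \<rho>mc \<rho>0 \<omega> Pout :: "nat \<Rightarrow> complex mat" and Deff :: "nat \<Rightarrow> real"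
  defines "M \<equiv> \<lambda>N. {j. j < dS * dB N \<and> \<bar>E N j - u * real N\<bar> \<le> \<Delta> N}"
    and "Dmc \<equiv> \<lambda>N. card (M N)"
    and "\<rho>mc \<equiv> \<lambda>N. (1 / of_nat (Dmc N)) \<cdot>\<^sub>m
            sum_mats (dS * dB N) (\<lambda> j. ketbra (v N j)) (M N)"
    and "\<rho>0 \<equiv> \<lambda>N. tensor dS (dB N) (\<rho>S N) (\<rho>B N)"
    and "\<omega> \<equiv> \<lambda>N. sum_mats (dS * dB N) (\<lambda>j. braket (v N j) (\<rho>0 N *\<^sub>v v N j) \<cdot>\<^sub>m ketbra (v N j)) {..<dS * dB N}"
    and "Pout \<equiv> \<lambda>N. sum_mats (dS * dB N) (\<lambda>j. ketbra (v N j)) ({..<dS * dB N} - M N)"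
    and "Deff \<equiv> \<lambda>N. 1 / (\<Sum>j<dS * dB N. (Re (braket (v N j) (\<rho>0 N *\<^sub>v v N j)))\<^sup>2)"
  assumes H_carrier: "\<And>N. H N \<in> carrier_mat (dS * dB N) (dS * dB N)"
    and H_herm: "\<And>N. cadj (H N) = H N"
    and eig_vec: "\<And>N j. j < dS * dB N \<Longrightarrow> v N j \<in> carrier_vec (dS * dB N)"
    and eig: "\<And>N j. j < dS * dB N \<Longrightarrow> H N *\<^sub>v v N j = complex_of_real (E N j) \<cdot>\<^sub>v v N j"
    and orthonormal: "\<And>N j k. j < dS * dB N \<Longrightarrow> k < dS * dB N \<Longrightarrow>
                        braket (v N j) (v N k) = (if j = k then 1 else 0)"
    and nondeg: "\<And>N. inj_on (E N) {..<dS * dB N}"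
    and rhoS: "\<And>N. density dS (\<rho>S N)"
    and rhoB: "\<And>N. density (dB N) (\<rho>B N)"
    and Delta_pos: "\<And>N. \<Delta> N > 0"
    and alpha: "0 \<le> \<alpha>" "\<alpha> < 1"
    and Delta_O: "\<Delta> \<in> O(\<lambda>N. real N powr \<alpha>)"
    and M_ne: "\<And>N. M N \<noteq> {}"
    and cond_i: "\<And>\<epsilon>. \<epsilon> > 0 \<Longrightarrow> eventually (\<lambda>N. Re (mtrace (Pout N * \<rho>0 N)) < \<epsilon>) sequentially"
    and cond_ii_iii: "\<exists>\<gamma> :: real \<Rightarrow> real. \<forall>\<epsilon>>0. \<gamma> \<epsilon> > 0 \<and>
        (\<forall>N. real (card {j \<in> M N. local_dist dS (dB N) (ketbra (v N j)) (\<rho>mc N) > \<epsilon>}) / real (Dmc N)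
               < exp (- \<gamma> \<epsilon> * real N)) \<and>
        (\<forall>\<epsilon>'>0. eventually (\<lambda>N. Deff N > real (Dmc N) * exp (- \<gamma> \<epsilon> * real N) / \<epsilon>') sequentially)"
  shows "\<forall>\<epsilon>>0. eventually (\<lambda>N. local_dist dS (dB N) (\<omega> N) (\<rho>mc N) < \<epsilon>) sequentially"
proof (intro allI impI)
  fix \<eta> :: real assume eta: "\<eta> > 0"
  obtain \<gamma> :: "real \<Rightarrow> real" where gam: "\<forall>\<epsilon>>0. \<gamma> \<epsilon> > 0 \<and>
        (\<forall>N. real (card {j \<in> M N. local_dist dS (dB N) (ketbra (v N j)) (\<rho>mc N) > \<epsilon>}) / real (Dmc N)
               < exp (- \<gamma> \<epsilon> * real N)) \<and>
        (\<forall>\<epsilon>'>0. eventually (\<lambda>N. Deff N > real (Dmc N) * exp (- \<gamma> \<epsilon> * real N) / \<epsilon>') sequentially)"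
    using cond_ii_iii by (rule exE)
  define K where "K = sqrt (real dS) * (real (dS * dS) + 1) + 1"
  have "sqrt (real dS) * (real (dS * dS) + 1) \<ge> 0" by simp
  then have Kpos: "K > 0" unfolding K_def by linarith
  define t where "t = \<eta> / (4 * K)"
  have tpos: "t > 0" unfolding t_def using eta Kpos by simp
  define g where "g = \<gamma> t"
  have gpos: "g > 0" and hii: "\<And>N. real (card {j \<in> M N. local_dist dS (dB N) (ketbra (v N j)) (\<rho>mc N) > t}) / real (Dmc N)
               < exp (- g * real N)"
    and hiii: "\<And>e. e > 0 \<Longrightarrow> eventually (\<lambda>N. Deff N > real (Dmc N) * exp (- g * real N) / e) sequentially"
    using gam tpos unfolding g_def by blast+
  have ev1: "eventually (\<lambda>N. Re (mtrace (Pout N * \<rho>0 N)) < t) sequentially" by (rule cond_i[OF tpos])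
  have ev2: "eventually (\<lambda>N. Deff N > real (Dmc N) * exp (- g * real N) / t\<^sup>2) sequentially"
    by (rule hiii) (use tpos in simp)
  show "eventually (\<lambda>N. local_dist dS (dB N) (\<omega> N) (\<rho>mc N) < \<eta>) sequentially"
    using ev1 ev2
  proof eventually_elim
    case (elim N)
    have h1: "Re (mtrace (Pout N * \<rho>0 N)) < t" using elim by blast
    have h2: "Deff N > real (Dmc N) * exp (- g * real N) / t\<^sup>2" using elim by blast
    have Msub: "M N \<subseteq> {..<dS * dB N}" unfolding M_def by auto
    have PN: "local_dist dS (dB N) (\<omega> N) (\<rho>mc N) \<le> sqrt (real dS) * (real (dS * dS) * Re (mtrace (Pout N * \<rho>0 N)) + t
          + real (dS * dS) * sqrt (real (card {j \<in> M N. local_dist dS (dB N) (ketbra (v N j)) (\<rho>mc N) > t}) * (\<Sum>j<dS * dB N. (Re (braket (v N j) (\<rho>0 N *\<^sub>v v N j)))\<^sup>2)))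
       \<and> (\<Sum>j<dS * dB N. (Re (braket (v N j) (\<rho>0 N *\<^sub>v v N j)))\<^sup>2) > 0"
      unfolding \<omega>_def \<rho>mc_def Dmc_def \<rho>0_def Pout_def
      by (rule per_N[OF eig_vec orthonormal rhoS rhoB Msub M_ne less_imp_le[OF tpos]])
    define S2 where "S2 = (\<Sum>j<dS * dB N. (Re (braket (v N j) (\<rho>0 N *\<^sub>v v N j)))\<^sup>2)"
    define cb where "cb = real (card {j \<in> M N. local_dist dS (dB N) (ketbra (v N j)) (\<rho>mc N) > t})"
    define Y where "Y = real (Dmc N) * exp (- g * real N)"
    have S2pos: "S2 > 0" using PN unfolding S2_def by blast
    have LD: "local_dist dS (dB N) (\<omega> N) (\<rho>mc N) \<le> sqrt (real dS) * (real (dS * dS) * Re (mtrace (Pout N * \<rho>0 N)) + t + real (dS * dS) * sqrt (cb * S2))"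
      using PN unfolding S2_def cb_def by blast
    have Dpos: "real (Dmc N) > 0"
    proof -
      have "finite (M N)" using Msub finite_subset by blast
      then show ?thesis unfolding Dmc_def using M_ne[of N] by (simp add: card_gt_0_iff)
    qed
    have cbY: "cb < Y" using hii[of N] Dpos unfolding cb_def Y_def by (simp add: divide_less_eq mult.commute)
    have DeffS: "Deff N = 1 / S2" unfolding Deff_def S2_def by simp
    have "Y / t\<^sup>2 < 1 / S2" using h2 unfolding DeffS Y_def by simp
    then have YS: "Y * S2 < t\<^sup>2" using S2pos tpos by (simp add: field_simps)
    have cb0: "cb \<ge> 0" unfolding cb_def by simp
    have "cb * S2 \<le> Y * S2" using cbY S2pos by (simp add: mult_right_mono)
    then have "cb * S2 < t\<^sup>2" using YS by linarith
    then have sq: "sqrt (cb * S2) < t" using tpos by (metis real_sqrt_less_iff real_sqrt_abs abs_of_pos power2_eq_square real_sqrt_mult_self)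
    have d0: "real (dS * dS) \<ge> 0" by simp
    have b1: "real (dS * dS) * Re (mtrace (Pout N * \<rho>0 N)) \<le> real (dS * dS) * t"
      using h1 d0 by (simp add: mult_left_mono)
    have b2: "real (dS * dS) * sqrt (cb * S2) \<le> real (dS * dS) * t"
      using sq d0 by (simp add: mult_left_mono)
    have "real (dS * dS) * Re (mtrace (Pout N * \<rho>0 N)) + t + real (dS * dS) * sqrt (cb * S2) \<le> (2 * real (dS * dS) + 1) * t"
      using b1 b2 by (simp add: algebra_simps)
    then have "sqrt (real dS) * (real (dS * dS) * Re (mtrace (Pout N * \<rho>0 N)) + t + real (dS * dS) * sqrt (cb * S2))
       \<le> sqrt (real dS) * ((2 * real (dS * dS) + 1) * t)"
      by (rule mult_left_mono) simp
    also have "\<dots> = (sqrt (real dS) * (2 * real (dS * dS) + 1)) * t" by simp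
    also have "\<dots> \<le> (2 * K) * t"
    proof (rule mult_right_mono)
      have "sqrt (real dS) * (2 * real (dS * dS) + 1) \<le> sqrt (real dS) * (2 * real (dS * dS) + 2)"
        by (rule mult_left_mono) simp_all
      then show "sqrt (real dS) * (2 * real (dS * dS) + 1) \<le> 2 * K" unfolding K_def by (simp add: algebra_simps)
    qed (use tpos in simp)
    also have "\<dots> = \<eta> / 2" unfolding t_def using Kpos by simp
    also have "\<dots> < \<eta>" using eta by simp
    finally show ?case using LD by linarith
  qed
qed

end
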